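(* Let $G$ be a multigraph in which each edge $\{u,v\}$ appears at most twice in $E(G)$, and let $\mathsf{VC}$ be a vertex cover of $G$. Assume every vertex of $G$ has even degree. Then there exists a multiset $\mathcal{C}$ of cycles in $G$ such that: (1) at most $2|\mathsf{VC}|^2$ cycles in $\mathcal{C}$ have length other than $4$; (2) the cycles in $\mathcal{C}$ of length other than $4$ are simple; (3) the multiset sum $\biguplus_{C\in\mathcal{C}}E(C)$ equals $E(G)$ as multisets.
   Context: A path in a multigraph is a sequence $(v_0,\dots,v_\ell)$ of vertices with $\{v_i,v_{i+1}\}$ an edge for all $0\le i<\ell$ (vertices and edges may repeat); its length is $\ell$. A cycle is a path with $v_0=v_\ell$; it is simple if $v_0,\dots,v_{\ell-1}$ are pairwise distinct. For a cycle $C=(v_0,\dots,v_\ell)$, $E(C)$ is the multiset $\{\{v_i,v_{i+1}\}:0\le i<\ell\}$ (with repetition). Degrees count edges with multiplicity. *)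

theory Defs
  imports Main "HOL-Library.Multiset"
begin

definition multigraph :: "'a set \<Rightarrow> 'a set multiset \<Rightarrow> bool" where
  "multigraph V E \<longleftrightarrow> finite V \<and> (\<forall>e\<in>#E. e \<subseteq> V \<and> card e = 2)"

definition degree :: "'a set multiset \<Rightarrow> 'a \<Rightarrow> nat" where
  "degree E v = size (filter_mset (\<lambda>e. v \<in> e) E)"

definition vertex_cover :: "'a set \<Rightarrow> 'a set multiset \<Rightarrow> 'a set \<Rightarrow> bool" where
  "vertex_cover V E VC \<longleftrightarrow> VC \<subseteq> V \<and> (\<forall>e\<in>#E. e \<inter> VC \<noteq> {})"

definition is_path :: "'a set \<Rightarrow> 'a set multiset \<Rightarrow> 'a list \<Rightarrow> bool" where
  "is_path V E p \<longleftrightarrow> p \<noteq> [] \<and> set p \<subseteq> V \<and>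
     (\<forall>i. i + 1 < length p \<longrightarrow> {p ! i, p ! (i + 1)} \<in># E)"

definition path_len :: "'a list \<Rightarrow> nat" where
  "path_len p = length p - 1"

definition is_cycle :: "'a set \<Rightarrow> 'a set multiset \<Rightarrow> 'a list \<Rightarrow> bool" where
  "is_cycle V E c \<longleftrightarrow> is_path V E c \<and> hd c = last c"

definition simple_cycle :: "'a list \<Rightarrow> bool" where
  "simple_cycle c \<longleftrightarrow> distinct (butlast c)"

definition cycle_edges :: "'a list \<Rightarrow> 'a set multiset" where
  "cycle_edges c = mset (map (\<lambda>i. {c ! i, c ! (i + 1)}) [0..<path_len c])"

end

theory Submission
  imports Defs
begin

fun pe :: "'a list \<Rightarrow> 'a set multiset" where
  "pe (x # y # r) = add_mset {x, y} (pe (y # r))"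
| "pe _ = {#}"

lemma cycle_edges_pe: "cycle_edges xs = pe xs"
proof (induction xs rule: pe.induct)
  case (1 x y r)
  have "[0..<path_len (x # y # r)] = 0 # map Suc [0..<path_len (y # r)]"
    by (simp add: path_len_def upt_conv_Cons map_Suc_upt del: upt_Suc)
  then show ?case using 1 by (simp add: cycle_edges_def comp_def)
qed (auto simp: cycle_edges_def path_len_def)

lemma degree_add_mset: "degree (add_mset e M) v = (if v \<in> e then Suc (degree M v) else degree M v)"
  by (simp add: degree_def)

lemma degree_plus: "degree (M + N) v = degree M v + degree N v"
  by (simp add: degree_def)

lemma degree_diff: "N \<subseteq># M \<Longrightarrow> degree (M - N) v = degree M v - degree N v"
  by (simp add: degree_def size_Diff_submset multiset_filter_mono)

lemma degree_mono: "N \<subseteq># M \<Longrightarrow> degree N v \<le> degree M v"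
  by (simp add: degree_def size_mset_mono multiset_filter_mono)

lemma even_degree_diff:
  "N \<subseteq># M \<Longrightarrow> even (degree M v) \<Longrightarrow> even (degree N v) \<Longrightarrow> even (degree (M - N) v)"
  using degree_diff by (metis dvd_diff_nat)

lemma pe_degree:
  assumes "p \<noteq> []" "\<forall>e\<in>#pe p. card e = 2"
  shows "even (degree (pe p) v + (if hd p = v then 1 else 0) + (if last p = v then 1 else 0))"
  using assms
proof (induction p rule: pe.induct)
  case (1 x y r)
  then have xy: "x \<noteq> y" by auto
  have IH: "even (degree (pe (y#r)) v + (if y = v then 1 else 0) + (if last (y#r) = v then 1 else 0))"
    using 1 by auto
  show ?case using IH xy by (auto simp: degree_add_mset)
qed (auto simp: degree_def)

lemma pe_closed_even:
  assumes "p \<noteq> []" "\<forall>e\<in>#pe p. card e = 2" "hd p = last p"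
  shows "even (degree (pe p) v)"
  using pe_degree[OF assms(1,2), of v] assms(3) by (auto split: if_splits)

fun walk :: "'a set multiset \<Rightarrow> 'a list \<Rightarrow> bool" where
  "walk E (x # y # r) = ({x,y} \<in># E \<and> walk E (y # r))"
| "walk E _ = True"

lemma pe_subset_set: "e \<in># pe p \<Longrightarrow> e \<subseteq> set p"
  by (induction p rule: pe.induct) auto

lemma add_mset_le:
  assumes "a \<notin># A" "A \<subseteq># B" "a \<in># B" shows "add_mset a A \<subseteq># B"
  unfolding subseteq_mset_def
proof
  fix x
  show "count (add_mset a A) x \<le> count B x"
  proof (cases "x = a")
    case True
    have "count A a = 0" using assms(1) by (simp add: not_in_iff)
    moreover have "0 < count B a" using assms(3) by simp
    ultimately show ?thesis using True by simp
  next
    case False then show ?thesis using assms(2) by (simp add: subseteq_mset_def)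
  qed
qed

lemma pe_distinct_sub: "distinct p \<Longrightarrow> walk E p \<Longrightarrow> pe p \<subseteq># E"
proof (induction p rule: pe.induct)
  case (1 x y r)
  have "{x,y} \<notin># pe (y#r)" using pe_subset_set 1(2) by fastforce
  then show ?case using 1 add_mset_le by auto
qed auto

lemma walk_append: "walk E (xs @ ys) \<Longrightarrow> walk E xs"
  by (induction xs rule: pe.induct) auto

lemma two_in: assumes "e \<in># F" "e2 \<in># F - {#e#}" shows "{#e, e2#} \<subseteq># F"
  using assms by (simp add: insert_subset_eq_iff)

lemma deg_ge2: "e \<in># E' \<Longrightarrow> u \<in> e \<Longrightarrow> even (degree E' u) \<Longrightarrow> 2 \<le> degree E' u"
proof -
  assume a: "e \<in># E'" "u \<in> e" "even (degree E' u)"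
  have "e \<in># filter_mset (\<lambda>e. u \<in> e) E'" using a by simp
  then have "filter_mset (\<lambda>e. u \<in> e) E' \<noteq> {#}" by force
  then have "degree E' u \<noteq> 0" unfolding degree_def by simp
  moreover obtain k where "degree E' u = 2 * k" using a(3) by (rule evenE)
  ultimately show ?thesis by simp
qed

lemma other_edge:
  assumes "e \<in># E'" "u \<in> e" "even (degree E' u)"
  shows "\<exists>e2. e2 \<in># filter_mset (\<lambda>e. u \<in> e) E' - {#e#}"
proof -
  have d: "2 \<le> degree E' u" using deg_ge2[OF assms] .
  have "e \<in># filter_mset (\<lambda>e. u \<in> e) E'" using assms by simp
  then have "size (filter_mset (\<lambda>e. u \<in> e) E' - {#e#}) = degree E' u - 1"
    by (simp add: degree_def size_Diff_submset)
  then have "filter_mset (\<lambda>e. u \<in> e) E' - {#e#} \<noteq> {#}" using d by auto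
  then show ?thesis by blast
qed

lemma card2_obt: assumes "card e = 2" obtains a b where "e = {a,b}" "a \<noteq> b"
  using card_2_iff[THEN iffD1, OF assms] by blast

lemma card2_mem: assumes "card e = 2" "u \<in> e" shows "\<exists>x. e = {u, x} \<and> x \<noteq> u"
proof -
  obtain a b where ab: "e = {a,b}" "a \<noteq> b" using assms(1) by (rule card2_obt)
  show ?thesis
  proof (cases "u = a")
    case True then show ?thesis using ab by (intro exI[of _ b]) simp
  next
    case False then have "u = b" using ab(1) assms(2) by simp
    then show ?thesis using ab by (intro exI[of _ a]) (auto simp: insert_commute)
  qed
qed

lemma find_cycle:
  assumes fin: "finite V" and edges: "\<forall>e\<in>#E'. e \<subseteq> V \<and> card e = 2"
    and ev: "\<forall>v. even (degree E' v)"
  shows "distinct p \<Longrightarrow> walk E' p \<Longrightarrow> set p \<subseteq> V \<Longrightarrow> length p \<ge> 2 \<Longrightarrow>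
     \<exists>c. c \<noteq> [] \<and> hd c = last c \<and> set c \<subseteq> V \<and> distinct (butlast c) \<and> length c \<ge> 3 \<and> pe c \<subseteq># E'"
proof (induction "card V - length p" arbitrary: p rule: less_induct)
  case less
  obtain u v r where p: "p = u # v # r"
  proof -
    from less.prems(4) obtain u t where pt: "p = u # t" by (cases p) auto
    with less.prems(4) obtain v r where "t = v # r" by (cases t) auto
    with pt show ?thesis using that by blast
  qed
  have uv: "{u,v} \<in># E'" using less.prems(2) p by simp
  have evu: "even (degree E' u)" using ev by blast
  obtain e2 where e2: "e2 \<in># filter_mset (\<lambda>e. u \<in> e) E' - {#{u,v}#}"
    using other_edge[OF uv insertI1 evu] by blast
  have e2E: "e2 \<in># E'" and ue2: "u \<in> e2"
    using e2 by (auto dest: in_diffD)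
  have uvne: "u \<noteq> v" using less.prems(1) p by simp
  show ?case
  proof (cases "e2 = {u,v}")
    case True
    have "{#{u,v}, {u,v}#} \<subseteq># filter_mset (\<lambda>e. u \<in> e) E'"
      using two_in[of "{u,v}" "filter_mset (\<lambda>e. u \<in> e) E'" e2] e2 True uv by simp
    then have "{#{u,v}, {u,v}#} \<subseteq># E'" using multiset_filter_subset subset_mset.order_trans by blast
    moreover have "pe [u,v,u] = {#{u,v}, {u,v}#}" by (simp add: insert_commute)
    ultimately have pc: "pe [u,v,u] \<subseteq># E'" by simp
    have "set [u,v,u] \<subseteq> V" using less.prems(3) p by simp
    then show ?thesis using uvne pc
      by (intro exI[of _ "[u,v,u]"]) simp
  next
    case False
    have c2: "card e2 = 2" using edges e2E by blast
    obtain x where x: "e2 = {u, x}" "x \<noteq> u" using card2_mem[OF c2 ue2] by blast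
    have xv: "x \<noteq> v" using x False by auto
    have xV: "x \<in> V" using edges e2E x by auto
    have xuE: "{x,u} \<in># E'" using e2E x(1) by (simp add: insert_commute)
    show ?thesis
    proof (cases "x \<in> set p")
      case False
      have "set (x # p) \<subseteq> V" using less.prems(3) xV by simp
      then have "card (set (x # p)) \<le> card V" using fin by (simp add: card_mono)
      moreover have dxp: "distinct (x # p)" using less.prems(1) False by simp
      ultimately have len: "length (x # p) \<le> card V" by (simp only: distinct_card)
      then have lt: "card V - length (x # p) < card V - length p" by simp
      have w: "walk E' (x # p)" using less.prems(2) p xuE by simp
      have s: "set (x # p) \<subseteq> V" using less.prems(3) xV by simp
      have l: "length (x # p) \<ge> 2" using less.prems(4) by simp
      show ?thesis using less.hyps[OF lt dxp w s l] .
    next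
      case True
      then have "x \<in> set r" using p x(2) xv by simp
      then obtain r1 r2 where r: "r = r1 @ x # r2" by (meson split_list)
      define q where "q = u # v # r1 @ [x]"
      have pq: "p = q @ r2" using p r q_def by simp
      have dq: "distinct q" using less.prems(1) pq by simp
      have wq: "walk E' q" using less.prems(2) pq walk_append by blast
      have sq: "pe q \<subseteq># E'" using pe_distinct_sub dq wq by blast
      have nin: "{x,u} \<notin># pe q"
      proof
        assume "{x,u} \<in># pe q"
        then have "{x,u} = {u,v} \<or> {x,u} \<in># pe (v # r1 @ [x])" by (simp add: q_def)
        then show False
        proof
          assume "{x,u} = {u,v}" then show False using xv x(2) by (auto simp: doubleton_eq_iff)
        next
          assume "{x,u} \<in># pe (v # r1 @ [x])"
          then have "{x,u} \<subseteq> set (v # r1 @ [x])" by (rule pe_subset_set)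
          then have "u \<in> set (v # r1 @ [x])" by simp
          then show False using dq unfolding q_def by simp
        qed
      qed
      have "pe (x # q) = add_mset {x,u} (pe q)" by (simp add: q_def)
      then have "pe (x # q) \<subseteq># E'"
        using add_mset_le[OF nin sq xuE] by simp
      moreover have "set (x # q) \<subseteq> V" using less.prems(3) pq xV by auto
      moreover have "distinct (butlast (x # q))" using dq x(2) xv unfolding q_def by (simp add: butlast_append)
      moreover have "hd (x # q) = last (x # q)" "length (x # q) \<ge> 3" by (simp_all add: q_def)
      ultimately show ?thesis
        by (intro exI[of _ "x # q"]) simp
    qed
  qed
qed

lemma size_cycle_edges: "size (cycle_edges c) = path_len c"
  by (simp add: cycle_edges_def)

lemma in_sum_sub: "C \<in># M \<Longrightarrow> f C \<subseteq># (\<Sum>x\<in>#M. f x)"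
  by (metis mset_subset_eq_add_left multi_member_split image_mset_add_mset sum_mset.insert)

lemma size_sum_ge: fixes f :: "'a \<Rightarrow> 'b multiset" shows "(\<forall>C\<in>#M. 2 \<le> size (f C)) \<Longrightarrow> 2 * size M \<le> size (\<Sum>x\<in>#M. f x)"
proof (induction M)
  case (add x M)
  have "size (f x + (\<Sum>y\<in>#M. f y)) = size (f x) + size (\<Sum>y\<in>#M. f y)" by (rule size_union)
  then show ?case using add by simp
qed simp

lemma simple_decomp:
  assumes fin: "finite V"
  shows "\<forall>e\<in>#E'. e \<subseteq> V \<and> card e = 2 \<Longrightarrow> \<forall>v. even (degree E' v) \<Longrightarrow>
    \<exists>\<C>. (\<forall>C\<in>#\<C>. C \<noteq> [] \<and> hd C = last C \<and> set C \<subseteq> V \<and> simple_cycle C \<and> path_len C \<ge> 2)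
       \<and> (\<Sum>C\<in>#\<C>. cycle_edges C) = E'"
proof (induction "size E'" arbitrary: E' rule: less_induct)
  case less
  show ?case
  proof (cases "E' = {#}")
    case True then show ?thesis by (intro exI[of _ "{#}"]) auto
  next
    case False
    then obtain e where e: "e \<in># E'" by blast
    have "card e = 2" using less.prems(1) e by blast
    then obtain a b where ab: "e = {a,b}" "a \<noteq> b" by (rule card2_obt)
    have "distinct [a,b]" "walk E' [a,b]" "set [a,b] \<subseteq> V" "length [a,b] \<ge> 2"
      using ab e less.prems(1) by auto
    then obtain c where c: "c \<noteq> []" "hd c = last c" "set c \<subseteq> V" "distinct (butlast c)" "length c \<ge> 3" "pe c \<subseteq># E'"
      using find_cycle[OF fin less.prems(1,2)] by blast
    have card2: "\<forall>e\<in>#pe c. card e = 2" using c(6) less.prems(1) by (auto dest: mset_subset_eqD)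
    have sz: "size (pe c) = path_len c" using size_cycle_edges cycle_edges_pe by metis
    then have "size (pe c) > 0" using c(5) by (simp add: path_len_def)
    then have lt: "size (E' - pe c) < size E'" using c(6) size_mset_mono[OF c(6)] by (simp add: size_Diff_submset)
    have p1: "\<forall>e\<in>#E' - pe c. e \<subseteq> V \<and> card e = 2" using less.prems(1) by (auto dest: in_diffD)
    have p2: "\<forall>v. even (degree (E' - pe c) v)"
      using even_degree_diff[OF c(6)] less.prems(2) pe_closed_even[OF c(1) card2 c(2)] by blast
    obtain \<C> where C: "\<forall>C\<in>#\<C>. C \<noteq> [] \<and> hd C = last C \<and> set C \<subseteq> V \<and> simple_cycle C \<and> path_len C \<ge> 2"
      "(\<Sum>C\<in>#\<C>. cycle_edges C) = E' - pe c"
      using less.hyps[OF lt p1 p2] by blast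
    show ?thesis
    proof (intro exI[of _ "add_mset c \<C>"] conjI)
      show "\<forall>C\<in>#add_mset c \<C>. C \<noteq> [] \<and> hd C = last C \<and> set C \<subseteq> V \<and> simple_cycle C \<and> 2 \<le> path_len C"
        using C(1) c by (auto simp: simple_cycle_def path_len_def)
      show "(\<Sum>C\<in>#add_mset c \<C>. cycle_edges C) = E'"
        using C(2) c(6) by (simp add: cycle_edges_pe subset_mset.add_diff_inverse)
    qed
  qed
qed

lemma is_cycle_intro:
  assumes "c \<noteq> []" "hd c = last c" "set c \<subseteq> V" "cycle_edges c \<subseteq># E"
  shows "is_cycle V E c"
proof -
  have "{c ! i, c ! (i + 1)} \<in># E" if "i + 1 < length c" for i
  proof -
    have "{c ! i, c ! (i + 1)} \<in># cycle_edges c" using that by (auto simp: cycle_edges_def path_len_def)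
    then show ?thesis using assms(4) by (auto dest: mset_subset_eqD)
  qed
  then show ?thesis using assms by (auto simp: is_cycle_def is_path_def)
qed

lemma cherry_decomp:
  "(\<forall>e\<in>#B. \<exists>w x. e = {w,x} \<and> w \<notin> VC \<and> x \<in> VC) \<Longrightarrow> (\<forall>w. w \<notin> VC \<longrightarrow> even (degree B w)) \<Longrightarrow>
   \<exists>Q. (\<forall>q\<in>#Q. fst q \<notin> VC \<and> fst (snd q) \<in> VC \<and> snd (snd q) \<in> VC) \<and>
       (\<Sum>q\<in>#Q. {#{fst q, fst (snd q)}, {fst q, snd (snd q)}#}) = B"
proof (induction "size B" arbitrary: B rule: less_induct)
  case less
  show ?case
  proof (cases "B = {#}")
    case True thus ?thesis by (intro exI[of _ "{#}"]) auto
  next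
    case False
    then obtain e where e: "e \<in># B" by blast
    have "\<exists>w x. e = {w,x} \<and> w \<notin> VC \<and> x \<in> VC" using bspec[OF less.prems(1) e] .
    then obtain w x where wx: "e = {w,x}" "w \<notin> VC" "x \<in> VC" by (elim exE conjE)
    have we: "w \<in> e" using wx(1) by simp
    have evw: "even (degree B w)" using less.prems(2) wx(2) by blast
    obtain e2 where e2: "e2 \<in># filter_mset (\<lambda>e. w \<in> e) B - {#e#}"
      using other_edge[OF e we evw] by (elim exE)
    have ef: "e \<in># filter_mset (\<lambda>e. w \<in> e) B" using e we by simp
    have sub: "{#e, e2#} \<subseteq># B"
      using subset_mset.order_trans[OF two_in[OF ef e2] multiset_filter_subset] .
    have e2B: "e2 \<in># B" and we2: "w \<in> e2" using e2 by (auto dest: in_diffD)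
    have "\<exists>w x. e2 = {w,x} \<and> w \<notin> VC \<and> x \<in> VC" using bspec[OF less.prems(1) e2B] .
    then obtain w2 y where wy: "e2 = {w2,y}" "w2 \<notin> VC" "y \<in> VC" by (elim exE conjE)
    have ww: "w2 = w" using we2 wy wx by auto
    define B' where "B' = B - {#e, e2#}"
    have lt: "size B' < size B" using sub size_mset_mono[OF sub] by (simp add: B'_def size_Diff_submset)
    have p1: "\<forall>e\<in>#B'. \<exists>w x. e = {w,x} \<and> w \<notin> VC \<and> x \<in> VC"
      using less.prems(1) by (auto simp: B'_def dest: in_diffD)
    have p2: "\<forall>u. u \<notin> VC \<longrightarrow> even (degree B' u)"
    proof (intro allI impI)
      fix u assume u: "u \<notin> VC"
      have "even (degree {#e, e2#} u)"
        using u wx wy ww by (auto simp: degree_add_mset degree_def)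
      moreover have "even (degree B u)" using less.prems(2) u by blast
      ultimately show "even (degree B' u)"
        unfolding B'_def using even_degree_diff[OF sub] by blast
    qed
    obtain Q where Q: "\<forall>q\<in>#Q. fst q \<notin> VC \<and> fst (snd q) \<in> VC \<and> snd (snd q) \<in> VC"
      "(\<Sum>q\<in>#Q. {#{fst q, fst (snd q)}, {fst q, snd (snd q)}#}) = B'"
      using less.hyps[OF lt p1 p2] by blast
    show ?thesis
    proof (intro exI[of _ "add_mset (w,x,y) Q"] conjI)
      show "\<forall>q\<in>#add_mset (w, x, y) Q. fst q \<notin> VC \<and> fst (snd q) \<in> VC \<and> snd (snd q) \<in> VC"
        using Q(1) wx wy by auto
      have "{#e, e2#} + B' = B" unfolding B'_def using sub by (rule subset_mset.add_diff_inverse)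
      then show "(\<Sum>q\<in>#add_mset (w, x, y) Q. {#{fst q, fst (snd q)}, {fst q, snd (snd q)}#}) = B"
        using Q(2) wx wy ww by simp
    qed
  qed
qed

lemma pigeon:
  assumes "finite S" "set_mset M \<subseteq> S" "card S < size M"
  shows "\<exists>x. 2 \<le> count M x"
proof -
  have "size (mset_set S) < size M" using assms by simp
  then obtain x where x: "x \<in># M" "count (mset_set S) x < count M x"
    using size_lt_imp_ex_count_lt by blast
  then have "x \<in> S" using assms by auto
  then have "count (mset_set S) x = 1" using assms(1) by simp
  then have "2 \<le> count M x" using x(2) by simp
  then show ?thesis by blast
qed

lemma size_le_twice:
  assumes "finite S" "set_mset M \<subseteq> S" "\<forall>x. count M x \<le> 2"
  shows "size M \<le> 2 * card S"
proof (rule ccontr)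
  assume "\<not> ?thesis"
  then have "size (mset_set S + mset_set S) < size M" by simp
  then obtain x where x: "x \<in># M" "count (mset_set S + mset_set S) x < count M x"
    using size_lt_imp_ex_count_lt by blast
  then have "x \<in> S" using assms by auto
  then have "count (mset_set S + mset_set S) x = 2" using assms(1) by simp
  then show False using x assms(3) by (metis not_le)
qed

lemma two_elems:
  assumes "2 \<le> count (image_mset g Q) m"
  shows "\<exists>q1 q2. {#q1, q2#} \<subseteq># Q \<and> g q1 = m \<and> g q2 = m"
proof -
  define F where "F = filter_mset (\<lambda>q. g q = m) Q"
  have "image_mset g F = filter_mset (\<lambda>y. y = m) (image_mset g Q)"
    unfolding F_def by (rule image_mset_filter_mset_swap)
  then have "size F = count (image_mset g Q) m"
    by (metis filter_eq_replicate_mset size_image_mset size_replicate_mset)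
  then have sF: "2 \<le> size F" using assms by simp
  then obtain q1 where q1: "q1 \<in># F" by (metis multiset_nonemptyE size_empty not_numeral_le_zero)
  have "size (F - {#q1#}) \<ge> 1" using sF q1 by (simp add: size_Diff_submset)
  then obtain q2 where q2: "q2 \<in># F - {#q1#}" by (metis multiset_nonemptyE size_empty not_one_le_zero)
  have "{#q1, q2#} \<subseteq># F" using two_in[OF q1 q2] .
  moreover have "g q1 = m" "g q2 = m" using q1 q2 by (auto simp: F_def dest: in_diffD)
  ultimately show ?thesis unfolding F_def using multiset_filter_subset subset_mset.order_trans by blast
qed

lemma pair_sum_sub: "{#q1, q2#} \<subseteq># Q \<Longrightarrow> f q1 + f q2 \<subseteq># (\<Sum>x\<in>#Q. f x)"
proof -
  assume h: "{#q1, q2#} \<subseteq># Q"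
  define R where "R = Q - {#q1, q2#}"
  have Q: "Q = {#q1, q2#} + R" unfolding R_def using h by (rule subset_mset.add_diff_inverse[symmetric])
  show ?thesis by (subst Q) (simp add: add.assoc)
qed

lemma size_sum_2: fixes f :: "'a \<Rightarrow> 'b multiset" shows "(\<forall>q\<in>#Q. size (f q) = 2) \<Longrightarrow> size (\<Sum>x\<in>#Q. f x) = 2 * size Q"
  by (induction Q) (auto simp: size_union)

lemma four_cycle:
  assumes mg: "multigraph V E" and c2: "\<forall>e. count E e \<le> 2" and vc: "vertex_cover V E VC"
    and sub: "E' \<subseteq># E" and ev: "\<forall>v. even (degree E' v)"
    and big: "4 * (card VC)^2 < size E'"
  shows "\<exists>c. c \<noteq> [] \<and> hd c = last c \<and> set c \<subseteq> V \<and> path_len c = 4 \<and> pe c \<subseteq># E'"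
proof -
  define k where "k = card VC"
  have finV: "finite V" and edges: "\<forall>e\<in>#E. e \<subseteq> V \<and> card e = 2" using mg by (auto simp: multigraph_def)
  have VCV: "VC \<subseteq> V" and cov: "\<forall>e\<in>#E. e \<inter> VC \<noteq> {}" using vc by (auto simp: vertex_cover_def)
  have finVC: "finite VC" using finV VCV finite_subset by blast
  have inE: "e \<in># E" if "e \<in># E'" for e using that sub by (auto dest: mset_subset_eqD)
  define A where "A = filter_mset (\<lambda>e. e \<subseteq> VC) E'"
  define B where "B = filter_mset (\<lambda>e. \<not> e \<subseteq> VC) E'"
  have AB: "E' = A + B" unfolding A_def B_def by (rule multiset_partition)
  have sA: "size A \<le> k^2"
  proof -
    have "size A \<le> 2 * card {e. e \<subseteq> VC \<and> card e = 2}"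
    proof (rule size_le_twice)
      show "finite {e. e \<subseteq> VC \<and> card e = 2}" using finVC by auto
      show "set_mset A \<subseteq> {e. e \<subseteq> VC \<and> card e = 2}" using edges inE by (auto simp: A_def)
      show "\<forall>x. count A x \<le> 2"
      proof
        fix x
        have "count A x \<le> count E' x" by (simp add: A_def)
        also have "\<dots> \<le> count E x" using sub by (simp add: subseteq_mset_def)
        finally show "count A x \<le> 2" using c2 by (meson le_trans)
      qed
    qed
    also have "\<dots> = 2 * (k choose 2)" using n_subsets[OF finVC] by (simp add: k_def)
    also have "\<dots> \<le> k * (k - 1)" by (simp add: choose_two)
    also have "\<dots> \<le> k^2" by (simp add: power2_eq_square)
    finally show ?thesis .
  qed
  have sB: "2 * k^2 < size B" using big sA AB by (simp add: k_def)
  have Bform: "\<forall>e\<in>#B. \<exists>w x. e = {w,x} \<and> w \<notin> VC \<and> x \<in> VC"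
  proof
    fix e assume e: "e \<in># B"
    then have eE: "e \<in># E" and nsub: "\<not> e \<subseteq> VC" using inE by (auto simp: B_def)
    have "card e = 2" using bspec[OF edges eE] by (rule conjunct2)
    then obtain a b where ab: "e = {a,b}" "a \<noteq> b" by (rule card2_obt)
    have "e \<inter> VC \<noteq> {}" using bspec[OF cov eE] .
    then have c1: "a \<in> VC \<or> b \<in> VC" unfolding ab(1) by blast
    have c2: "a \<notin> VC \<or> b \<notin> VC" using nsub unfolding ab(1) by simp
    show "\<exists>w x. e = {w,x} \<and> w \<notin> VC \<and> x \<in> VC"
    proof (cases "a \<in> VC")
      case True then have "b \<notin> VC" using c2 by blast
      then show ?thesis using True ab(1) by (intro exI[of _ b] exI[of _ a]) (simp add: insert_commute)
    next
      case False then have "b \<in> VC" using c1 by blast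
      then show ?thesis using False ab(1) by (intro exI[of _ a] exI[of _ b]) simp
    qed
  qed
  have Bdeg: "\<forall>w. w \<notin> VC \<longrightarrow> even (degree B w)"
  proof (intro allI impI)
    fix w assume w: "w \<notin> VC"
    have "\<forall>x. x \<in># A \<longrightarrow> w \<notin> x" using w by (auto simp: A_def)
    then have "degree A w = 0" by (simp add: degree_def)
    moreover have "degree E' w = degree A w + degree B w" by (subst AB) (rule degree_plus)
    moreover have "even (degree E' w)" using ev by blast
    ultimately show "even (degree B w)" by simp
  qed
  obtain Q where Q: "\<forall>q\<in>#Q. fst q \<notin> VC \<and> fst (snd q) \<in> VC \<and> snd (snd q) \<in> VC"
      "(\<Sum>q\<in>#Q. {#{fst q, fst (snd q)}, {fst q, snd (snd q)}#}) = B"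
    using cherry_decomp[OF Bform Bdeg] by blast
  have "size B = 2 * size Q" using Q(2) size_sum_2[of Q "\<lambda>q. {#{fst q, fst (snd q)}, {fst q, snd (snd q)}#}"] by simp
  then have sQ: "k^2 < size Q" using sB by simp
  define g where "g = (\<lambda>q::'a \<times> 'a \<times> 'a. {#fst (snd q), snd (snd q)#})"
  define S where "S = (\<lambda>(a,b). {#a,b#}) ` (VC \<times> VC)"
  have finS: "finite S" using finVC by (simp add: S_def)
  have cS: "card S \<le> k^2" unfolding S_def k_def
    using card_image_le[of "VC \<times> VC" "\<lambda>(a,b). {#a,b#}"] finVC by (simp add: card_cartesian_product power2_eq_square)
  have sub: "set_mset (image_mset g Q) \<subseteq> S"
  proof
    fix m assume "m \<in># image_mset g Q"
    then obtain q where q: "q \<in># Q" "m = g q" by auto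
    then have sq: "snd q \<in> VC \<times> VC" using Q(1) by (simp add: mem_Times_iff)
    have "m = (\<lambda>(a,b). {#a,b#}) (snd q)" using q(2) by (simp add: g_def case_prod_beta)
    then show "m \<in> S" unfolding S_def using sq by (rule rev_image_eqI[rotated])
  qed
  have "card S < size (image_mset g Q)" using cS sQ by simp
  from pigeon[OF finS sub this] obtain m where m: "2 \<le> count (image_mset g Q) m" ..
  from two_elems[OF m] obtain q1 q2 where qq: "{#q1, q2#} \<subseteq># Q" "g q1 = m" "g q2 = m" by blast
  obtain w a b where q1: "q1 = (w,a,b)" by (cases q1) auto
  obtain w' a' b' where q2: "q2 = (w',a',b')" by (cases q2) auto
  have mem: "q1 \<in># Q" "q2 \<in># Q" using qq(1) by (auto dest: mset_subset_eqD)
  have "{#a,b#} = {#a',b'#}" using qq q1 q2 by (simp add: g_def)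
  then have ab': "(a' = a \<and> b' = b) \<or> (a' = b \<and> b' = a)" by (auto simp: add_eq_conv_diff single_eq_add_mset split: if_splits)
  let ?f = "\<lambda>q. {#{fst q, fst (snd q)}, {fst q, snd (snd q)}#}"
  have "?f q1 + ?f q2 \<subseteq># (\<Sum>q\<in>#Q. ?f q)" by (rule pair_sum_sub[OF qq(1)])
  then have s1: "?f q1 + ?f q2 \<subseteq># B" using Q(2) by simp
  have f2: "?f q2 = {#{w',a},{w',b}#}"
  proof (cases "a' = a \<and> b' = b")
    case True then show ?thesis using q2 by simp
  next
    case False then have "a' = b" "b' = a" using ab' by auto
    then show ?thesis using q2 by (simp add: add_mset_commute)
  qed
  have f1: "?f q1 = {#{w,a},{w,b}#}" using q1 by simp
  have Y: "{#{w,a},{w,b}#} + {#{w',a},{w',b}#} \<subseteq># E'"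
    using s1 unfolding f1 f2 B_def using multiset_filter_subset subset_mset.order_trans by blast
  have i1: "{a,w} = {w,a}" by (rule insert_commute)
  have i2: "{b,w'} = {w',b}" by (rule insert_commute)
  have "pe [a,w,b,w',a] = {#{w,a},{w,b},{w',b},{w',a}#}" by (simp only: pe.simps i1 i2)
  also have "\<dots> = {#{w,a},{w,b}#} + {#{w',a},{w',b}#}" by (simp add: add_mset_commute)
  finally have eq: "pe [a,w,b,w',a] = {#{w,a},{w,b}#} + {#{w',a},{w',b}#}" .
  have pc: "pe [a,w,b,w',a] \<subseteq># E'" unfolding eq by (rule Y)
  have "{w,a} \<in># E'" by (rule mset_subset_eqD[OF Y]) simp
  moreover have "{w',a} \<in># E'" by (rule mset_subset_eqD[OF Y]) simp
  ultimately have "{w,a} \<in># E'" "{w',a} \<in># E'" by blast+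
  then have "{w,a} \<subseteq> V" "{w',a} \<subseteq> V" using inE edges by blast+
  then have "w \<in> V" "w' \<in> V" by auto
  moreover have "a \<in> V" "b \<in> V" using Q(1) mem q1 VCV by auto
  ultimately show ?thesis using pc by (intro exI[of _ "[a,w,b,w',a]"]) (simp add: path_len_def)
qed

lemma main_lemma:
  assumes mg: "multigraph V E" and c2: "\<forall>e. count E e \<le> 2" and vc: "vertex_cover V E VC"
  shows "E' \<subseteq># E \<Longrightarrow> \<forall>v. even (degree E' v) \<Longrightarrow>
    \<exists>\<C> :: 'a list multiset.
           (\<forall>C\<in>#\<C>. is_cycle V E C) \<and>
           size (filter_mset (\<lambda>C. path_len C \<noteq> 4) \<C>) \<le> 2 * (card VC)^2 \<and>
           (\<forall>C\<in>#\<C>. path_len C \<noteq> 4 \<longrightarrow> simple_cycle C) \<and>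
           (\<Sum>C\<in>#\<C>. cycle_edges C) = E'"
proof (induction "size E'" arbitrary: E' rule: less_induct)
  case less
  have finV: "finite V" and edges: "\<forall>e\<in>#E. e \<subseteq> V \<and> card e = 2" using mg by (auto simp: multigraph_def)
  have edges': "\<forall>e\<in>#E'. e \<subseteq> V \<and> card e = 2" using edges less.prems(1) by (auto dest: mset_subset_eqD)
  show ?case
  proof (cases "size E' \<le> 4 * (card VC)^2")
    case True
    obtain \<C> where C: "\<forall>C\<in>#\<C>. C \<noteq> [] \<and> hd C = last C \<and> set C \<subseteq> V \<and> simple_cycle C \<and> path_len C \<ge> 2"
       "(\<Sum>C\<in>#\<C>. cycle_edges C) = E'"
      using simple_decomp[OF finV edges' less.prems(2)] by blast
    have "2 * size \<C> \<le> size E'" using size_sum_ge[of \<C> cycle_edges] C by (simp add: size_cycle_edges)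
    then have "size \<C> \<le> 2 * (card VC)^2" using True by simp
    moreover have "size (filter_mset (\<lambda>C. path_len C \<noteq> 4) \<C>) \<le> size \<C>" by (rule size_filter_mset_lesseq)
    ultimately have F: "size (filter_mset (\<lambda>C. path_len C \<noteq> 4) \<C>) \<le> 2 * (card VC)^2" by linarith
    moreover have "\<forall>C\<in>#\<C>. is_cycle V E C"
    proof
      fix C assume "C \<in># \<C>"
      moreover have "cycle_edges C \<subseteq># E" using in_sum_sub[OF \<open>C \<in># \<C>\<close>, of cycle_edges] C(2) less.prems(1)
        by (metis subset_mset.order_trans)
      ultimately show "is_cycle V E C" using C(1) is_cycle_intro by blast
    qed
    ultimately show ?thesis using C by (intro exI[of _ \<C>]) auto
  next
    case False
    then obtain c where c: "c \<noteq> []" "hd c = last c" "set c \<subseteq> V" "path_len c = 4" "pe c \<subseteq># E'"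
      using four_cycle[OF mg c2 vc less.prems(1,2)] by auto
    have card2: "\<forall>e\<in>#pe c. card e = 2" using c(5) edges' by (auto dest: mset_subset_eqD)
    have sz: "size (pe c) = path_len c" using size_cycle_edges cycle_edges_pe by metis
    then have lt: "size (E' - pe c) < size E'" using c(4,5) size_mset_mono[OF c(5)] by (simp add: size_Diff_submset)
    have p1: "E' - pe c \<subseteq># E" using less.prems(1) by (meson diff_subset_eq_self subset_mset.order_trans)
    have p2: "\<forall>v. even (degree (E' - pe c) v)"
      using even_degree_diff[OF c(5)] less.prems(2) pe_closed_even[OF c(1) card2 c(2)] by blast
    obtain \<C> where C: "\<forall>C\<in>#\<C>. is_cycle V E C"
           "size (filter_mset (\<lambda>C. path_len C \<noteq> 4) \<C>) \<le> 2 * (card VC)^2"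
           "\<forall>C\<in>#\<C>. path_len C \<noteq> 4 \<longrightarrow> simple_cycle C"
           "(\<Sum>C\<in>#\<C>. cycle_edges C) = E' - pe c"
      using less.hyps[OF lt p1 p2] by blast
    have "is_cycle V E c"
      using is_cycle_intro[OF c(1,2,3)] c(5) less.prems(1) by (metis cycle_edges_pe subset_mset.order_trans)
    moreover have "(\<Sum>C\<in>#add_mset c \<C>. cycle_edges C) = E'"
    proof -
      have "(\<Sum>C\<in>#add_mset c \<C>. cycle_edges C) = pe c + (E' - pe c)" using C(4) by (simp add: cycle_edges_pe)
      also have "\<dots> = E'" using c(5) by (rule subset_mset.add_diff_inverse)
      finally show ?thesis .
    qed
    moreover have "size (filter_mset (\<lambda>C. path_len C \<noteq> 4) (add_mset c \<C>)) \<le> 2 * (card VC)^2"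
      using C(2) c(4) by simp
    ultimately show ?thesis using C(1,3) c(4)
      by (intro exI[of _ "add_mset c \<C>"]) auto
  qed
qed

theorem mainTheorem8:
  fixes V :: "'a set" and E :: "'a set multiset" and VC :: "'a set"
  assumes "multigraph V E"
    and "\<forall>e. count E e \<le> 2"
    and "vertex_cover V E VC"
    and "\<forall>v\<in>V. even (degree E v)"
  shows "\<exists>\<C> :: 'a list multiset.
           (\<forall>C\<in>#\<C>. is_cycle V E C) \<and>
           size (filter_mset (\<lambda>C. path_len C \<noteq> 4) \<C>) \<le> 2 * (card VC)^2 \<and>
           (\<forall>C\<in>#\<C>. path_len C \<noteq> 4 \<longrightarrow> simple_cycle C) \<and>
           (\<Sum>C\<in>#\<C>. cycle_edges C) = E"
proof -
  have "degree E v = 0" if "v \<notin> V" for v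
  proof -
    have "\<forall>x. x \<in># E \<longrightarrow> v \<notin> x" using assms(1) that by (auto simp: multigraph_def)
    then show ?thesis by (simp add: degree_def)
  qed
  then have "\<forall>v. even (degree E v)" using assms(4) by (metis even_zero)
  then show ?thesis using main_lemma[OF assms(1,2,3)] by blast
qed

end
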